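(* Let $\mathbf{u}=(u_n)$ be an a-sequence with $q_\mathbf{u}<\infty$. Let $S=\{n_1<n_2<\cdots<n_k<\cdots\}$ be an infinite subset of $S^*_\mathbf{u}$ such that $d_i:=n_{i+1}-n_i\ge 2$ for all $i\ge1$, and let $$x_S=\frac{1}{u_{n_1}}-\frac{1}{u_{n_2}}+\frac{1}{u_{n_3}}-\frac{1}{u_{n_4}}+\cdots \in\mathbb{T}.$$ Then: (a) if $n_k\le n<n_{k+1}$, then $\|u_{n-1}x_S\|\le\|u_{n_k-1}x_S\|$, and $$\frac{1}{q_\mathbf{u}}-\frac{1}{2^{d_k-1}q_\mathbf{u}^2}\le\frac{1}{q_{n_k}}-\frac{1}{q_{n_k}\cdots q_{n_{k+1}}}\le\|u_{n_k-1}x_S\|\le\frac{1}{q_{n_k}}-\frac{1}{q_{n_k}\cdots q_{n_{k+1}}}+\frac{1}{q_{n_k}\cdots q_{n_{k+2}}};$$ (b) $\varrho_\mathbf{u}(x_S,0)=\max\{\|x_S\|,\ \sup_{k\in\mathbb{N}}\|u_{n_k-1}x_S\|\}$; (c) if $S'\neq S$ is another set with the same properties as $S$, then $x_S\neq x_{S'}$.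
   Context: An a-sequence is a strictly increasing sequence of integers $\mathbf{u}=(u_n)_{n\in\mathbb{N}}$ with $u_n\mid u_{n+1}$ for all $n$. Its ratios are $q_0=u_0$ and $q_n=u_n/u_{n-1}$ ($n>0$); $q_\mathbf{u}=\limsup_n q_n$ and $S^*_\mathbf{u}=\{m\in\mathbb{N}: q_m=q_\mathbf{u}\}$. $\mathbb{T}=\mathbb{R}/\mathbb{Z}$, $\|x\|$ is the distance from $x$ to the nearest integer, $d(x,y)=\|x-y\|$, and $\varrho_\mathbf{u}(x,y)=\sup_n\max\{d(x,y),d(u_nx,u_ny)\}$ on $\mathbb{T}$. *)

theory Defs
  imports Complex_Main "HOL-Library.Infinite_Set" "HOL-Library.Extended_Real"
begin

definition a_seq :: "(nat \<Rightarrow> nat) \<Rightarrow> bool" where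
  "a_seq u \<longleftrightarrow> strict_mono u \<and> (\<forall>n. u n dvd u (Suc n))"

text \<open>u_{n-1}, with the convention u_{-1} = 1 (so that q_0 = u_0).\<close>
definition uprev :: "(nat \<Rightarrow> nat) \<Rightarrow> nat \<Rightarrow> nat" where
  "uprev u n = (if n = 0 then 1 else u (n - 1))"

definition qr :: "(nat \<Rightarrow> nat) \<Rightarrow> nat \<Rightarrow> real" where
  "qr u n = real (u n) / real (uprev u n)"

definition qsup :: "(nat \<Rightarrow> nat) \<Rightarrow> ereal" where
  "qsup u = limsup (\<lambda>n. ereal (qr u n))"

definition Sstar :: "(nat \<Rightarrow> nat) \<Rightarrow> nat set" where
  "Sstar u = {m. ereal (qr u m) = qsup u}"

definition nint :: "real \<Rightarrow> real" where
  "nint x = \<bar>x - of_int (round x)\<bar>"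

text \<open>rho_u(x,y) on the circle, points represented by real numbers.\<close>
definition rho :: "(nat \<Rightarrow> nat) \<Rightarrow> real \<Rightarrow> real \<Rightarrow> real" where
  "rho u x y = (SUP n. max (nint (x - y)) (nint (real (u n) * x - real (u n) * y)))"

text \<open>Admissible sets S: infinite subsets of S* with gaps at least 2.
  The paper's n_k (k >= 1) is enumerate S (k - 1).\<close>
definition admissible :: "(nat \<Rightarrow> nat) \<Rightarrow> nat set \<Rightarrow> bool" where
  "admissible u S \<longleftrightarrow> infinite S \<and> S \<subseteq> Sstar u \<and>
     (\<forall>i. enumerate S i + 2 \<le> enumerate S (Suc i))"

text \<open>x_S = 1/u_{n_1} - 1/u_{n_2} + ... (a real representative of the point of T).\<close>
definition xS :: "(nat \<Rightarrow> nat) \<Rightarrow> nat set \<Rightarrow> real" where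
  "xS u S = (\<Sum>i. (-1) ^ i / real (u (enumerate S i)))"

end

theory Submission
  imports Defs
begin


lemma nint_abs: "nint y = \<bar>y - of_int (round y)\<bar>" by (simp add: nint_def)

lemma nint_le: "nint y \<le> \<bar>y - of_int m\<bar>"
proof (cases "m = round y")
  case True thus ?thesis by (simp add: nint_def)
next
  case False
  have h: "\<bar>of_int (round y) - y\<bar> \<le> 1/2" by (rule of_int_round_abs_le)
  have "1 \<le> \<bar>m - round y\<bar>" using False by simp
  hence "1 \<le> \<bar>of_int m - of_int (round y)::real\<bar>"
    by (metis of_int_1_le_iff of_int_abs of_int_diff)
  thus ?thesis using h unfolding nint_def by linarith
qed

lemma nint_half: "nint y \<le> 1/2" "0 \<le> nint y"
  using of_int_round_abs_le[of y] by (auto simp: nint_def abs_minus_commute)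

lemma nint_id: assumes "0 \<le> y" "y \<le> 1/2" shows "nint y = y"
proof -
  have "nint y \<le> y" using nint_le[of y 0] assms by simp
  moreover have "y \<le> nint y"
  proof (cases "round y \<le> 0")
    case True thus ?thesis using assms unfolding nint_def by (smt (verit) of_int_le_0_iff)
  next
    case False hence "(1::real) \<le> of_int (round y)" by simp
    thus ?thesis using assms unfolding nint_def by linarith
  qed
  ultimately show ?thesis by simp
qed

lemma nint_add_int: "nint (of_int z + y) = nint y"
proof -
  have "nint (of_int z + y) \<le> nint y" using nint_le[of "of_int z + y" "z + round y"] by (simp add: nint_def)
  moreover have "nint y \<le> nint (of_int z + y)" using nint_le[of y "round (of_int z + y) - z"] by (simp add: nint_def)
  ultimately show ?thesis by simp
qed

lemma nint_minus: "nint (- y) = nint y"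
proof -
  have "nint (- y) \<le> nint y" using nint_le[of "- y" "- round y"] by (simp add: nint_def)
  moreover have "nint y \<le> nint (-y)" using nint_le[of y "- round (-y)"] by (simp add: nint_def)
  ultimately show ?thesis by simp
qed

lemma nint_sign: "nint (of_int z + (-1)^j * y) = nint y"
proof (cases "even j")
  case True thus ?thesis by (simp add: nint_add_int)
next
  case False
  have "nint (of_int z + (-1)^j * y) = nint (of_int z + (- y))" using False by simp
  also have "\<dots> = nint y" by (simp only: nint_add_int nint_minus)
  finally show ?thesis .
qed

lemma aseq_pos: assumes "a_seq u" shows "0 < u n"
proof -
  have "u 0 \<noteq> 0"
  proof
    assume "u 0 = 0"
    hence "u 1 = 0" using assms unfolding a_seq_def by (metis One_nat_def dvd_0_left)
    moreover have "u 0 < u 1" using assms unfolding a_seq_def by (simp add: strict_mono_def)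
    ultimately show False using \<open>u 0 = 0\<close> by simp
  qed
  moreover have "u 0 \<le> u n" using assms unfolding a_seq_def by (simp add: strict_mono_less_eq)
  ultimately show ?thesis by simp
qed

lemma aseq_dvd: assumes "a_seq u" "m \<le> n" shows "u m dvd u n"
  using assms(2)
proof (induction n rule: dec_induct)
  case base thus ?case by simp
next
  case (step n) thus ?case using assms(1) unfolding a_seq_def by (meson dvd_trans)
qed

lemma aseq_double: assumes "a_seq u" shows "2 * u n \<le> u (Suc n)"
proof -
  obtain c where c: "u (Suc n) = u n * c" using assms unfolding a_seq_def by blast
  have "u n < u (Suc n)" using assms unfolding a_seq_def by (simp add: strict_mono_def)
  hence "c \<noteq> 0" "c \<noteq> 1" using c by auto
  hence "c \<ge> 2" by simp
  thus ?thesis using c by simp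
qed

lemma aseq_pow: assumes "a_seq u" "m \<le> n" shows "2 ^ (n - m) * u m \<le> u n"
  using assms(2)
proof (induction n rule: dec_induct)
  case base thus ?case by simp
next
  case (step n)
  have "2 ^ (Suc n - m) * u m = 2 * (2 ^ (n - m) * u m)" using step(1) by (simp add: Suc_diff_le)
  also have "\<dots> \<le> 2 * u n" using step by simp
  also have "\<dots> \<le> u (Suc n)" by (rule aseq_double[OF assms(1)])
  finally show ?case .
qed

lemma uprev_pos: "a_seq u \<Longrightarrow> 0 < uprev u n"
  by (simp add: uprev_def aseq_pos)

lemma prod_qr: assumes "a_seq u" "a \<le> b"
  shows "(\<Prod>j\<in>{a..b}. qr u j) = real (u b) / real (uprev u a)"
  using assms(2)
proof (induction b rule: dec_induct)
  case base thus ?case by (simp add: qr_def)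
next
  case (step n)
  have "{a..Suc n} = insert (Suc n) {a..n}" using step(1) by auto
  hence "(\<Prod>j\<in>{a..Suc n}. qr u j) = qr u (Suc n) * (\<Prod>j\<in>{a..n}. qr u j)" by simp
  also have "\<dots> = real (u (Suc n)) / real (u n) * (real (u n) / real (uprev u a))"
    using step by (simp add: qr_def uprev_def)
  also have "\<dots> = real (u (Suc n)) / real (uprev u a)" using aseq_pos[OF assms(1), of n] by simp
  finally show ?case .
qed

lemma interval_find: assumes "strict_mono (f::nat\<Rightarrow>nat)" "f 0 \<le> m" shows "\<exists>k. f k \<le> m \<and> m < f (Suc k)"
  using assms(2)
proof (induction m rule: dec_induct)
  case base
  have "f 0 < f (Suc 0)" using strict_monoD[OF assms(1), of 0 "Suc 0"] by simp
  thus ?case by blast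
next
  case (step n)
  then obtain k where k: "f k \<le> n" "n < f (Suc k)" by blast
  show ?case
  proof (cases "Suc n < f (Suc k)")
    case True thus ?thesis using k by (intro exI[of _ k]) simp
  next
    case False hence "Suc n = f (Suc k)" using k by simp
    moreover have "f (Suc k) < f (Suc (Suc k))" using strict_monoD[OF assms(1), of "Suc k" "Suc (Suc k)"] by simp
    ultimately show ?thesis by (metis order.refl)
  qed
qed

context
  fixes u :: "nat \<Rightarrow> nat" and S :: "nat set"
  assumes au: "a_seq u" and adm: "admissible u S"
begin

abbreviation "Qc \<equiv> real_of_ereal (qsup u)"
abbreviation "nkc \<equiv> enumerate S"

lemma infS: "infinite S" using adm by (simp add: admissible_def)

lemma nk_gap: "nkc i + 2 \<le> nkc (Suc i)" using adm by (simp add: admissible_def)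

lemma nk_mono: "strict_mono nkc" using infS by (simp add: strict_mono_def enumerate_mono)

lemma nk_in: "nkc i \<in> S" using infS by (rule enumerate_in_set)

lemma qS: assumes "m \<in> S" shows "qr u m = Qc"
proof -
  have "ereal (qr u m) = qsup u" using adm assms by (auto simp: admissible_def Sstar_def)
  thus ?thesis by (metis real_of_ereal.simps(1))
qed

lemma Q2: "2 \<le> Qc"
proof -
  obtain m where m: "m \<in> S" "m \<noteq> 0" using infS
    by (metis finite.emptyI finite_insert insert_iff subsetI finite_subset)
  have "2 * u (m - 1) \<le> u m" using aseq_double[OF au, of "m - 1"] m by simp
  hence "2 * real (u (m - 1)) \<le> real (u m)" by linarith
  moreover have "0 < real (u (m - 1))" using aseq_pos[OF au] by simp
  ultimately have "2 \<le> real (u m) / real (u (m - 1))" by (simp add: field_simps)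
  thus ?thesis using qS[OF m(1)] m by (simp add: qr_def uprev_def)
qed

lemma uS: assumes "m \<in> S" shows "real (u m) = Qc * real (uprev u m)"
  using qS[OF assms] uprev_pos[OF au, of m] by (simp add: qr_def field_simps)

lemma uS': assumes "m \<in> S" "0 < m" shows "real (u m) = Qc * real (u (m - 1))"
  using uS[OF assms(1)] assms(2) by (simp add: uprev_def)

lemma tail:
  fixes N j :: nat
  assumes dv: "\<forall>i<j. u (nkc i) dvd N"
  defines "b \<equiv> \<lambda>i. real N / real (u (nkc (i + j)))"
  shows "\<exists>z::int. real N * xS u S = of_int z + (-1)^j * (\<Sum>i. (-1)^i * b i)"
    "b 0 - b 1 \<le> (\<Sum>i. (-1)^i * b i)"
    "(\<Sum>i. (-1)^i * b i) \<le> b 0 - b 1 + b 2"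
    "0 \<le> (\<Sum>i. (-1)^i * b i)"
    "(\<Sum>i. (-1)^i * b i) \<le> b 0"
proof -
  have smu: "strict_mono (\<lambda>i. u (nkc (i + j)))"
    using au nk_mono unfolding a_seq_def strict_mono_def by simp
  have fl: "filterlim (\<lambda>i. real (u (nkc (i + j)))) at_infinity sequentially"
    by (rule filterlim_at_top_imp_at_infinity, rule filterlim_compose[OF filterlim_real_sequentially filterlim_subseq[OF smu]])
  have b0: "b \<longlonglongrightarrow> 0" unfolding b_def by (rule tendsto_divide_0[OF tendsto_const fl])
  have bpos: "\<And>n. 0 \<le> b n" unfolding b_def by simp
  have bdec: "\<And>n. b (Suc n) \<le> b n"
  proof -
    fix n
    have "u (nkc (n + j)) \<le> u (nkc (Suc n + j))" using strict_mono_less_eq[OF smu, of n "Suc n"] by simp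
    moreover have "0 < u (nkc (n + j))" by (rule aseq_pos[OF au])
    ultimately show "b (Suc n) \<le> b n" unfolding b_def
      by (simp add: frac_le)
  qed
  note L = summable_Leibniz'[OF b0 bpos bdec]
  show "b 0 - b 1 \<le> (\<Sum>i. (-1)^i * b i)" using L(2)[of 1] by (simp add: numeral_2_eq_2)
  show "(\<Sum>i. (-1)^i * b i) \<le> b 0 - b 1 + b 2" using L(4)[of 1] by (simp add: numeral_3_eq_3 numeral_2_eq_2)
  show "0 \<le> (\<Sum>i. (-1)^i * b i)" using L(2)[of 0] by simp
  show "(\<Sum>i. (-1)^i * b i) \<le> b 0" using L(4)[of 0] by simp
  define a where "a = (\<lambda>i. 1 / real (u (nkc i)))"
  have smu0: "strict_mono (\<lambda>i. u (nkc i))"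
    using au nk_mono unfolding a_seq_def strict_mono_def by simp
  have fl0: "filterlim (\<lambda>i. real (u (nkc i))) at_infinity sequentially"
    by (rule filterlim_at_top_imp_at_infinity, rule filterlim_compose[OF filterlim_real_sequentially filterlim_subseq[OF smu0]])
  have a0: "a \<longlonglongrightarrow> 0" unfolding a_def by (rule tendsto_divide_0[OF tendsto_const fl0])
  have apos: "\<And>n. 0 \<le> a n" unfolding a_def by simp
  have adec: "\<And>n. a (Suc n) \<le> a n"
  proof -
    fix n
    have "u (nkc n) \<le> u (nkc (Suc n))" using strict_mono_less_eq[OF smu0, of n "Suc n"] by simp
    moreover have "0 < u (nkc n)" by (rule aseq_pos[OF au])
    ultimately show "a (Suc n) \<le> a n" unfolding a_def by (simp add: frac_le)
  qed
  have sa: "summable (\<lambda>i. (-1)^i * a i)" by (rule summable_Leibniz'(1)[OF a0 apos adec])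
  have xe: "xS u S = (\<Sum>i. (-1)^i * a i)" unfolding xS_def a_def by simp
  have sNa: "summable (\<lambda>i. real N * ((-1)^i * a i))" using sa by (rule summable_mult)
  have "real N * xS u S = (\<Sum>i. real N * ((-1)^i * a i))" unfolding xe using sa by (simp add: suminf_mult)
  also have "\<dots> = (\<Sum>i. real N * ((-1)^(i+j) * a (i+j))) + (\<Sum>i<j. real N * ((-1)^i * a i))"
    by (rule suminf_split_initial_segment[OF sNa])
  also have "(\<Sum>i. real N * ((-1)^(i+j) * a (i+j))) = (\<Sum>i. (-1)^j * ((-1)^i * b i))"
    by (simp add: a_def b_def power_add mult_ac)
  also have "\<dots> = (-1)^j * (\<Sum>i. (-1)^i * b i)" using L(1) by (simp add: suminf_mult)
  finally have eq: "real N * xS u S = (-1)^j * (\<Sum>i. (-1)^i * b i) + (\<Sum>i<j. real N * ((-1)^i * a i))" .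
  have "(\<Sum>i<j. real N * ((-1)^i * a i)) \<in> \<int>"
  proof (rule Ints_sum)
    fix i assume "i \<in> {..<j}"
    hence "u (nkc i) dvd N" using dv by simp
    then obtain c where c: "N = u (nkc i) * c" by blast
    have "real N * ((-1)^i * a i) = (-1)^i * real c" unfolding a_def c using aseq_pos[OF au, of "nkc i"] by simp
    thus "real N * ((-1)^i * a i) \<in> \<int>" by (metis Ints_mult Ints_of_nat Ints_minus Ints_1 Ints_power)
  qed
  then obtain z where "(\<Sum>i<j. real N * ((-1)^i * a i)) = of_int z" by (auto elim: Ints_cases)
  thus "\<exists>z::int. real N * xS u S = of_int z + (-1)^j * (\<Sum>i. (-1)^i * b i)" using eq by auto
qed

lemma b0_bound:
  assumes "n < m" "m \<in> S" "1 \<le> n \<or> 2 \<le> u 0"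
  shows "real (uprev u n) / real (u m) \<le> 1 / (2 * Qc)"
proof -
  have m1: "0 < m" using assms by simp
  have "2 * uprev u n \<le> u (m - 1)"
  proof (cases "n = 0")
    case True
    hence "2 \<le> u 0" using assms by simp
    moreover have "u 0 \<le> u (m - 1)" using au unfolding a_seq_def by (simp add: strict_mono_less_eq)
    ultimately show ?thesis using True by (simp add: uprev_def)
  next
    case False
    have A: "2 ^ (m - 1 - (n - 1)) * u (n - 1) \<le> u (m - 1)" using aseq_pow[OF au, of "n - 1" "m - 1"] assms by simp
    moreover have B: "2 * u (n - 1) \<le> 2 ^ (m - 1 - (n - 1)) * u (n - 1)"
    proof -
      have "1 \<le> m - 1 - (n - 1)" using assms False by simp
      hence "(2::nat) \<le> 2 ^ (m - 1 - (n - 1))"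
        by (metis power_one_right power_increasing_iff one_less_numeral_iff semiring_norm(76))
      thus ?thesis by simp
    qed
    have "2 * u (n - 1) \<le> u (m - 1)" using order_trans[OF B A] .
    thus ?thesis using False by (simp add: uprev_def)
  qed
  hence h: "2 * real (uprev u n) \<le> real (u (m - 1))" by linarith
  have um: "real (u m) = Qc * real (u (m - 1))" by (rule uS'[OF assms(2) m1])
  have Qp: "0 < Qc" using Q2 by simp
  have np: "0 < real (uprev u n)" using uprev_pos[OF au] by simp
  have "real (uprev u n) / real (u m) \<le> real (uprev u n) / (Qc * (2 * real (uprev u n)))"
    unfolding um using h Qp np by (intro divide_left_mono mult_left_mono) auto
  also have "\<dots> = 1 / (2 * Qc)" using np by simp
  finally show ?thesis .
qed

lemma small:
  assumes "n < nkc j" "\<forall>i<j. nkc i < n" "1 \<le> n \<or> 2 \<le> u 0"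
  shows "nint (real (uprev u n) * xS u S) \<le> 1 / (2 * Qc)"
proof -
  have dv: "\<forall>i<j. u (nkc i) dvd uprev u n"
  proof (intro allI impI)
    fix i assume "i < j"
    hence "nkc i < n" using assms by simp
    thus "u (nkc i) dvd uprev u n" using aseq_dvd[OF au, of "nkc i" "n - 1"] by (simp add: uprev_def)
  qed
  note T = tail[OF dv]
  let ?T = "\<Sum>i. (-1)^i * (real (uprev u n) / real (u (nkc (i + j))))"
  obtain z where z: "real (uprev u n) * xS u S = of_int z + (-1)^j * ?T" using T(1) by blast
  have b0: "real (uprev u n) / real (u (nkc j)) \<le> 1 / (2 * Qc)"
    by (rule b0_bound[OF assms(1) nk_in assms(3)])
  have "1 / (2 * Qc) \<le> 1/2" using Q2 by (simp add: field_simps)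
  hence "nint ?T = ?T" using T(4) T(5) b0 by (intro nint_id) auto
  thus ?thesis using z nint_sign T(5) b0 by simp
qed

lemma big:
  fixes k :: nat
  defines "N \<equiv> real (uprev u (nkc k))"
  shows "1 / Qc - N / real (u (nkc (Suc k))) \<le> nint (N * xS u S)"
    "nint (N * xS u S) \<le> 1 / Qc - N / real (u (nkc (Suc k))) + N / real (u (nkc (Suc (Suc k))))"
    "N / real (u (nkc (Suc k))) \<le> 1 / (2 ^ (nkc (Suc k) - nkc k - 1) * Qc ^ 2)"
proof -
  have dv: "\<forall>i<k. u (nkc i) dvd uprev u (nkc k)"
  proof (intro allI impI)
    fix i assume "i < k"
    hence "nkc i < nkc k" using nk_mono by (simp add: strict_mono_def)
    thus "u (nkc i) dvd uprev u (nkc k)" using aseq_dvd[OF au, of "nkc i" "nkc k - 1"] by (simp add: uprev_def)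
  qed
  note T = tail[OF dv]
  let ?T = "\<Sum>i. (-1)^i * (real (uprev u (nkc k)) / real (u (nkc (i + k))))"
  obtain z where z: "N * xS u S = of_int z + (-1)^k * ?T" using T(1) unfolding N_def by blast
  have Qp: "0 < Qc" using Q2 by simp
  have np: "0 < N" using uprev_pos[OF au] unfolding N_def by simp
  have b0: "N / real (u (nkc k)) = 1 / Qc" using uS[OF nk_in, of k] np Qp unfolding N_def by simp
  have "1 / Qc \<le> 1/2" using Q2 by (simp add: field_simps)
  hence "nint ?T = ?T" using T(4) T(5) b0 unfolding N_def by (intro nint_id) auto
  hence nT: "nint (N * xS u S) = ?T" using z nint_sign by simp
  show "1 / Qc - N / real (u (nkc (Suc k))) \<le> nint (N * xS u S)"
    using T(2) b0 nT unfolding N_def by simp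
  show "nint (N * xS u S) \<le> 1 / Qc - N / real (u (nkc (Suc k))) + N / real (u (nkc (Suc (Suc k))))"
    using T(3) b0 nT unfolding N_def by (simp add: numeral_2_eq_2)
  define d where "d = nkc (Suc k) - nkc k - 1"
  have g: "nkc k + 2 \<le> nkc (Suc k)" by (rule nk_gap)
  have "2 ^ d * u (nkc k) \<le> u (nkc (Suc k) - 1)"
    using aseq_pow[OF au, of "nkc k" "nkc (Suc k) - 1"] g unfolding d_def by (simp add: diff_commute)
  hence h: "2 ^ d * real (u (nkc k)) \<le> real (u (nkc (Suc k) - 1))"
    by (metis of_nat_le_iff of_nat_mult of_nat_numeral of_nat_power)
  have u1: "real (u (nkc (Suc k))) = Qc * real (u (nkc (Suc k) - 1))" using uS'[OF nk_in] g by simp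
  have u0: "real (u (nkc k)) = Qc * N" using uS[OF nk_in] unfolding N_def by simp
  have "2 ^ d * Qc ^ 2 * N \<le> real (u (nkc (Suc k)))"
    unfolding u1 using h u0 Qp by (simp add: power2_eq_square mult_ac mult_left_mono)
  moreover have "0 < 2 ^ d * Qc ^ 2 * N" using np Qp by simp
  ultimately have "N / real (u (nkc (Suc k))) \<le> N / (2 ^ d * Qc ^ 2 * N)"
    using np by (intro divide_left_mono) auto
  also have "\<dots> = 1 / (2 ^ d * Qc ^ 2)" using np by simp
  finally show "N / real (u (nkc (Suc k))) \<le> 1 / (2 ^ (nkc (Suc k) - nkc k - 1) * Qc ^ 2)" unfolding d_def .
qed

lemma big_lower: "1 / (2 * Qc) < nint (real (uprev u (nkc k)) * xS u S)"
proof -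
  have Qp: "0 < Qc" using Q2 by simp
  have g: "nkc k + 2 \<le> nkc (Suc k)" by (rule nk_gap)
  hence "1 \<le> nkc (Suc k) - nkc k - 1" by simp
  hence "(2::real) ^ 1 \<le> 2 ^ (nkc (Suc k) - nkc k - 1)" by (intro power_increasing) auto
  hence "1 / (2 ^ (nkc (Suc k) - nkc k - 1) * Qc ^ 2) \<le> 1 / (2 * Qc ^ 2)"
    using Qp by (intro divide_left_mono mult_right_mono) auto
  moreover have "1 / (2 * Qc) < 1 / Qc - 1 / (2 * Qc ^ 2)"
  proof -
    have "1 / Qc - 1 / (2 * Qc ^ 2) - 1 / (2 * Qc) = (Qc - 1) / (2 * Qc ^ 2)" using Qp
      by (simp add: field_simps power2_eq_square)
    moreover have "0 < (Qc - 1) / (2 * Qc ^ 2)" using Q2 by simp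
    ultimately show ?thesis by linarith
  qed
  ultimately show ?thesis using big(1)[of k] big(3)[of k] by linarith
qed

lemma partA:
  assumes "nkc k \<le> n" "n < nkc (Suc k)"
  shows "nint (real (uprev u n) * xS u S) \<le> nint (real (uprev u (nkc k)) * xS u S)"
proof (cases "n = nkc k")
  case True thus ?thesis by simp
next
  case False
  hence lt: "nkc k < n" using assms by simp
  have "\<forall>i<Suc k. nkc i < n"
  proof (intro allI impI)
    fix i assume "i < Suc k"
    hence "nkc i \<le> nkc k" using nk_mono by (simp add: strict_mono_less_eq)
    thus "nkc i < n" using lt by simp
  qed
  hence "nint (real (uprev u n) * xS u S) \<le> 1 / (2 * Qc)"
    using small[of n "Suc k"] assms lt by simp
  thus ?thesis using big_lower[of k] by simp
qed

lemma not_in_small: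
  assumes "n \<notin> S" "1 \<le> n \<or> 2 \<le> u 0"
  shows "nint (real (uprev u n) * xS u S) \<le> 1 / (2 * Qc)"
proof (cases "n < nkc 0")
  case True thus ?thesis using small[of n 0] assms by simp
next
  case False
  hence "nkc 0 \<le> n" by simp
  then obtain k where k: "nkc k \<le> n" "n < nkc (Suc k)" using interval_find[OF nk_mono] by blast
  have "n \<noteq> nkc k" using assms nk_in by auto
  hence lt: "nkc k < n" using k by simp
  have "\<forall>i<Suc k. nkc i < n"
  proof (intro allI impI)
    fix i assume "i < Suc k"
    hence "nkc i \<le> nkc k" using nk_mono by (simp add: strict_mono_less_eq)
    thus "nkc i < n" using lt by simp
  qed
  thus ?thesis using small[of n "Suc k"] assms k by simp
qed

lemma char: "n \<in> S \<longleftrightarrow> ((1 \<le> n \<or> 2 \<le> u 0) \<and> 1 / (2 * Qc) < nint (real (uprev u n) * xS u S))"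
proof
  assume n: "n \<in> S"
  then obtain k where k: "nkc k = n" using enumerate_Ex[OF infS] by blast
  have "1 \<le> n \<or> 2 \<le> u 0"
  proof (cases "n = 0")
    case True
    have "qr u 0 = Qc" using qS n True by simp
    hence "real (u 0) = Qc" by (simp add: qr_def uprev_def)
    hence "2 \<le> real (u 0)" using Q2 by simp
    thus ?thesis by simp
  qed simp
  thus "(1 \<le> n \<or> 2 \<le> u 0) \<and> 1 / (2 * Qc) < nint (real (uprev u n) * xS u S)"
    using big_lower[of k] k by simp
next
  assume "(1 \<le> n \<or> 2 \<le> u 0) \<and> 1 / (2 * Qc) < nint (real (uprev u n) * xS u S)"
  thus "n \<in> S" using not_in_small by force
qed

lemma partB: "rho u (xS u S) 0 = max (nint (xS u S)) (SUP k. nint (real (uprev u (nkc k)) * xS u S))"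
proof -
  define x where "x = xS u S"
  define g where "g = (\<lambda>k. nint (real (uprev u (nkc k)) * x))"
  define h where "h = (\<lambda>n. max (nint x) (nint (real (u n) * x)))"
  have rh: "rho u x 0 = (SUP n. h n)" unfolding rho_def h_def by simp
  have bg: "bdd_above (range g)" unfolding g_def using nint_half by (intro bdd_aboveI[where M="1/2"]) auto
  have bh: "bdd_above (range h)" unfolding h_def using nint_half by (intro bdd_aboveI[where M="1/2"]) (auto simp: max_def)
  have gA: "\<And>k. g k \<le> (SUP k. g k)" using bg by (intro cSUP_upper) auto
  have hA: "\<And>n. h n \<le> (SUP n. h n)" using bh by (intro cSUP_upper) auto
  have "(SUP n. h n) \<le> max (nint x) (SUP k. g k)"
  proof (rule cSUP_least)
    fix n
    have un: "real (u n) = real (uprev u (Suc n))" by (simp add: uprev_def)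
    have "nint (real (uprev u (Suc n)) * x) \<le> (SUP k. g k)"
    proof (cases "Suc n < nkc 0")
      case True
      hence "nint (real (uprev u (Suc n)) * x) \<le> 1 / (2 * Qc)" using small[of "Suc n" 0] unfolding x_def by simp
      also have "\<dots> \<le> g 0" using big_lower[of 0] unfolding g_def x_def by simp
      finally show ?thesis using gA[of 0] by simp
    next
      case False
      hence "nkc 0 \<le> Suc n" by simp
      then obtain k where k: "nkc k \<le> Suc n" "Suc n < nkc (Suc k)" using interval_find[OF nk_mono] by blast
      have "nint (real (uprev u (Suc n)) * x) \<le> g k" using partA[OF k] unfolding g_def x_def .
      thus ?thesis using gA[of k] by simp
    qed
    thus "h n \<le> max (nint x) (SUP k. g k)" unfolding h_def un by simp
  qed simp
  moreover have "max (nint x) (SUP k. g k) \<le> (SUP n. h n)"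
  proof (rule max.boundedI)
    show "nint x \<le> (SUP n. h n)" using hA[of 0] unfolding h_def by simp
    show "(SUP k. g k) \<le> (SUP n. h n)"
    proof (rule cSUP_least)
      fix k
      show "g k \<le> (SUP n. h n)"
      proof (cases "nkc k = 0")
        case True thus ?thesis using hA[of 0] unfolding g_def h_def by (simp add: uprev_def)
      next
        case False thus ?thesis using hA[of "nkc k - 1"] unfolding g_def h_def by (simp add: uprev_def)
      qed
    qed simp
  qed
  ultimately have "(SUP n. h n) = max (nint x) (SUP k. g k)" by (rule antisym)
  thus ?thesis using rh unfolding x_def g_def by simp
qed

end


theorem mainTheorem5:
  fixes u :: "nat \<Rightarrow> nat" and S :: "nat set"
  assumes "a_seq u" and "qsup u < \<infinity>" and "admissible u S"
  defines "x \<equiv> xS u S" and "Q \<equiv> real_of_ereal (qsup u)" and "nk \<equiv> enumerate S"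
  shows
   "(\<forall>k n. nk k \<le> n \<and> n < nk (Suc k) \<longrightarrow>
        nint (real (uprev u n) * x) \<le> nint (real (uprev u (nk k)) * x)) \<and>
    (\<forall>k.
        1 / Q - 1 / (2 ^ (nk (Suc k) - nk k - 1) * Q ^ 2)
          \<le> 1 / qr u (nk k) - 1 / (\<Prod>j\<in>{nk k..nk (Suc k)}. qr u j) \<and>
        1 / qr u (nk k) - 1 / (\<Prod>j\<in>{nk k..nk (Suc k)}. qr u j)
          \<le> nint (real (uprev u (nk k)) * x) \<and>
        nint (real (uprev u (nk k)) * x)
          \<le> 1 / qr u (nk k) - 1 / (\<Prod>j\<in>{nk k..nk (Suc k)}. qr u j)
             + 1 / (\<Prod>j\<in>{nk k..nk (Suc (Suc k))}. qr u j)) \<and>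
    rho u x 0 = max (nint x) (SUP k. nint (real (uprev u (nk k)) * x)) \<and>
    (\<forall>S'. admissible u S' \<and> S' \<noteq> S \<longrightarrow> x - xS u S' \<notin> \<int>)"
proof -
  have Qd: "Q = real_of_ereal (qsup u)" by (simp add: Q_def)
  have P1: "\<forall>k n. nk k \<le> n \<and> n < nk (Suc k) \<longrightarrow>
        nint (real (uprev u n) * x) \<le> nint (real (uprev u (nk k)) * x)"
    using partA[OF assms(1,3)] unfolding x_def nk_def by blast
  have P2: "1 / Q - 1 / (2 ^ (nk (Suc k) - nk k - 1) * Q ^ 2)
          \<le> 1 / qr u (nk k) - 1 / (\<Prod>j\<in>{nk k..nk (Suc k)}. qr u j) \<and>
        1 / qr u (nk k) - 1 / (\<Prod>j\<in>{nk k..nk (Suc k)}. qr u j)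
          \<le> nint (real (uprev u (nk k)) * x) \<and>
        nint (real (uprev u (nk k)) * x)
          \<le> 1 / qr u (nk k) - 1 / (\<Prod>j\<in>{nk k..nk (Suc k)}. qr u j)
             + 1 / (\<Prod>j\<in>{nk k..nk (Suc (Suc k))}. qr u j)" for k
  proof -
    have mono: "strict_mono nk" using nk_mono[OF assms(1,3)] unfolding nk_def .
    have l1: "nk k \<le> nk (Suc k)" "nk k \<le> nk (Suc (Suc k))" using mono by (simp_all add: strict_mono_less_eq)
    have q: "qr u (nk k) = Q" using qS[OF assms(1,3) nk_in[OF assms(1,3)]] unfolding nk_def Q_def .
    have p1: "1 / (\<Prod>j\<in>{nk k..nk (Suc k)}. qr u j) = real (uprev u (nk k)) / real (u (nk (Suc k)))"
      using prod_qr[OF assms(1) l1(1)] by simp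
    have p2: "1 / (\<Prod>j\<in>{nk k..nk (Suc (Suc k))}. qr u j) = real (uprev u (nk k)) / real (u (nk (Suc (Suc k))))"
      using prod_qr[OF assms(1) l1(2)] by simp
    show ?thesis unfolding p1 p2 q
      using big[OF assms(1,3), of k] unfolding x_def nk_def Q_def by simp
  qed
  have P3: "rho u x 0 = max (nint x) (SUP k. nint (real (uprev u (nk k)) * x))"
    using partB[OF assms(1,3)] unfolding x_def nk_def .
  have P4: "\<forall>S'. admissible u S' \<and> S' \<noteq> S \<longrightarrow> x - xS u S' \<notin> \<int>"
  proof (intro allI impI notI)
    fix S' assume S': "admissible u S' \<and> S' \<noteq> S" and d: "x - xS u S' \<in> \<int>"
    from d obtain z where z: "x - xS u S' = of_int z" by (rule Ints_cases)
    have adm': "admissible u S'" using S' by simp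
    have "n \<in> S \<longleftrightarrow> n \<in> S'" for n
    proof -
      have xz: "xS u S = of_int z + xS u S'" using z unfolding x_def by simp
      have "real (uprev u n) * xS u S = of_int (int (uprev u n) * z) + real (uprev u n) * xS u S'"
        unfolding xz by (simp add: distrib_left)
      hence e: "nint (real (uprev u n) * xS u S) = nint (real (uprev u n) * xS u S')"
        by (simp only: nint_add_int)
      note c1 = char[OF assms(1,3), of n]
      note c2 = char[OF assms(1) adm', of n]
      show ?thesis unfolding c1 c2 e ..
    qed
    hence "S = S'" by (rule set_eqI)
    thus False using S' by simp
  qed
  have P2': "\<forall>k. 1 / Q - 1 / (2 ^ (nk (Suc k) - nk k - 1) * Q ^ 2)
          \<le> 1 / qr u (nk k) - 1 / (\<Prod>j\<in>{nk k..nk (Suc k)}. qr u j) \<and>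
        1 / qr u (nk k) - 1 / (\<Prod>j\<in>{nk k..nk (Suc k)}. qr u j)
          \<le> nint (real (uprev u (nk k)) * x) \<and>
        nint (real (uprev u (nk k)) * x)
          \<le> 1 / qr u (nk k) - 1 / (\<Prod>j\<in>{nk k..nk (Suc k)}. qr u j)
             + 1 / (\<Prod>j\<in>{nk k..nk (Suc (Suc k))}. qr u j)"
    by (intro allI) (rule P2)
  show ?thesis by (intro conjI P1 P2' P3 P4)
qed

end
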